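(* $\mathrm{AAut}_{\mathbb Z}(L)=\mathrm{Isom}_{\mathbb Z}(L)$.
   Context: $\mathbb F$ is a field of characteristic zero, $\mathfrak{sl}_2$ the Lie algebra of $2\times2$ trace-zero matrices over $\mathbb F$ with trace form $(u,v)=\mathrm{tr}(uv)$. Equitable basis: $x=\begin{pmatrix}1&0\\0&-1\end{pmatrix}$, $y=\begin{pmatrix}-1&2\\0&1\end{pmatrix}$, $z=\begin{pmatrix}-1&0\\-2&1\end{pmatrix}$, and $L=\mathbb Zx\oplus\mathbb Zy\oplus\mathbb Zz$. An antiautomorphism of $\mathfrak{sl}_2$ is an $\mathbb F$-linear bijection $\phi$ with $\phi([u,v])=[\phi(v),\phi(u)]$. $\mathrm{AAut}_{\mathbb Z}(L)$ is the group of all automorphisms and antiautomorphisms $\varphi$ of $\mathfrak{sl}_2$ with $\varphi(L)=L$. An isometry is an $\mathbb F$-linear bijection of $\mathfrak{sl}_2$ preserving the trace form; $\mathrm{Isom}_{\mathbb Z}(L)$ is the group of isometries $\varphi$ with $\varphi(L)=L$. *)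

theory Defs
  imports "Jordan_Normal_Form.Matrix"
begin

definition tr2 :: "'a::comm_ring_1 mat \<Rightarrow> 'a" where
  "tr2 A = (\<Sum>i<dim_row A. A $$ (i, i))"

definition sl2 :: "'a::field_char_0 mat set" where
  "sl2 = {A \<in> carrier_mat 2 2. tr2 A = 0}"

definition lie_bracket :: "'a::comm_ring_1 mat \<Rightarrow> 'a mat \<Rightarrow> 'a mat" where
  "lie_bracket u v = u * v - v * u"

definition trace_form :: "'a::comm_ring_1 mat \<Rightarrow> 'a mat \<Rightarrow> 'a" where
  "trace_form u v = tr2 (u * v)"

definition eqx :: "'a::field_char_0 mat" where
  "eqx = mat_of_rows_list 2 [[1, 0], [0, -1]]"
definition eqy :: "'a::field_char_0 mat" where
  "eqy = mat_of_rows_list 2 [[-1, 2], [0, 1]]"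
definition eqz :: "'a::field_char_0 mat" where
  "eqz = mat_of_rows_list 2 [[-1, 0], [-2, 1]]"

definition lattice_L :: "'a::field_char_0 mat set" where
  "lattice_L = {of_int a \<cdot>\<^sub>m eqx + of_int b \<cdot>\<^sub>m eqy + of_int c \<cdot>\<^sub>m eqz | a b c :: int. True}"

definition linear_bij_sl2 :: "('a::field_char_0 mat \<Rightarrow> 'a mat) \<Rightarrow> bool" where
  "linear_bij_sl2 f \<longleftrightarrow>
     bij_betw f sl2 sl2 \<and>
     (\<forall>u\<in>sl2. \<forall>v\<in>sl2. f (u + v) = f u + f v) \<and>
     (\<forall>c. \<forall>u\<in>sl2. f (c \<cdot>\<^sub>m u) = c \<cdot>\<^sub>m f u)"

definition is_automorphism_sl2 :: "('a::field_char_0 mat \<Rightarrow> 'a mat) \<Rightarrow> bool" where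
  "is_automorphism_sl2 f \<longleftrightarrow> linear_bij_sl2 f \<and>
     (\<forall>u\<in>sl2. \<forall>v\<in>sl2. f (lie_bracket u v) = lie_bracket (f u) (f v))"

definition is_antiautomorphism_sl2 :: "('a::field_char_0 mat \<Rightarrow> 'a mat) \<Rightarrow> bool" where
  "is_antiautomorphism_sl2 f \<longleftrightarrow> linear_bij_sl2 f \<and>
     (\<forall>u\<in>sl2. \<forall>v\<in>sl2. f (lie_bracket u v) = lie_bracket (f v) (f u))"

definition is_isometry_sl2 :: "('a::field_char_0 mat \<Rightarrow> 'a mat) \<Rightarrow> bool" where
  "is_isometry_sl2 f \<longleftrightarrow> linear_bij_sl2 f \<and>
     (\<forall>u\<in>sl2. \<forall>v\<in>sl2. trace_form (f u) (f v) = trace_form u v)"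

definition AAut_Z_L :: "('a::field_char_0 mat \<Rightarrow> 'a mat) set" where
  "AAut_Z_L = {f. (is_automorphism_sl2 f \<or> is_antiautomorphism_sl2 f) \<and> f ` lattice_L = lattice_L}"

definition Isom_Z_L :: "('a::field_char_0 mat \<Rightarrow> 'a mat) set" where
  "Isom_Z_L = {f. is_isometry_sl2 f \<and> f ` lattice_L = lattice_L}"

end

theory Submission imports Defs begin

definition m2 :: "'a::comm_ring_1 \<Rightarrow> 'a \<Rightarrow> 'a \<Rightarrow> 'a \<Rightarrow> 'a mat" where
  "m2 a b c d = mat 2 2 (\<lambda>(i,j). if i = 0 then (if j = 0 then a else b) else (if j = 0 then c else d))"

lemma m2_carrier[simp]: "m2 a b c d \<in> carrier_mat 2 2" by (simp add: m2_def)
lemma m2_idx[simp]: "m2 a b c d $$ (0,0) = a" "m2 a b c d $$ (0,1) = b"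
  "m2 a b c d $$ (1,0) = c" "m2 a b c d $$ (1,1) = d" "dim_row (m2 a b c d) = 2" "dim_col (m2 a b c d) = 2"
  by (simp_all add: m2_def)

lemma m2_eq_iff[simp]: "m2 a b c d = m2 a' b' c' d' \<longleftrightarrow> a = a' \<and> b = b' \<and> c = c' \<and> d = d'"
  by (metis m2_idx(1-4))

lemma less2: "(i::nat) < 2 \<longleftrightarrow> i = 0 \<or> i = 1" by auto

lemma carrier_m2: "A \<in> carrier_mat 2 2 \<Longrightarrow> A = m2 (A$$(0,0)) (A$$(0,1)) (A$$(1,0)) (A$$(1,1))"
  by (rule eq_matI) (auto simp: m2_def less2)

lemma m2_add[simp]: "m2 a b c d + m2 a' b' c' d' = m2 (a+a') (b+b') (c+c') (d+d')"
  by (rule eq_matI) (auto simp: m2_def less2)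
lemma m2_minus[simp]: "m2 a b c d - m2 a' b' c' d' = m2 (a-a') (b-b') (c-c') (d-d')"
  by (rule eq_matI) (auto simp: m2_def less2)
lemma m2_smult[simp]: "k \<cdot>\<^sub>m m2 a b c d = m2 (k*a) (k*b) (k*c) (k*d)"
  by (rule eq_matI) (auto simp: m2_def less2)
lemma m2_mult[simp]: "m2 a b c d * m2 a' b' c' d' = m2 (a*a'+b*c') (a*b'+b*d') (c*a'+d*c') (c*b'+d*d')"
  by (rule eq_matI) (auto simp: m2_def less2 scalar_prod_def numeral_2_eq_2)
lemma m2_tr[simp]: "tr2 (m2 a b c d) = a + d"
  by (simp add: tr2_def numeral_2_eq_2 m2_def)
lemma m2_zero: "0\<^sub>m 2 2 = m2 0 0 0 0"
  by (rule eq_matI) (auto simp: m2_def less2)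

lemma sl2_iff: "u \<in> sl2 \<longleftrightarrow> (\<exists>a b c. u = m2 a b c (-a))"
proof
  assume "u \<in> sl2"
  then have u: "u \<in> carrier_mat 2 2" "tr2 u = 0" by (auto simp: sl2_def)
  have "u = m2 (u$$(0,0)) (u$$(0,1)) (u$$(1,0)) (u$$(1,1))" using carrier_m2[OF u(1)] .
  moreover have "u$$(1,1) = - u$$(0,0)" using u(2) by (subst (asm) carrier_m2[OF u(1)]) (simp add: eq_neg_iff_add_eq_0 add.commute)
  ultimately show "\<exists>a b c. u = m2 a b c (-a)" by metis
qed (auto simp: sl2_def)

lemma sl2_m2[simp]: "m2 a b c (-a) \<in> sl2" by (auto simp: sl2_iff)


definition hh :: "'a::field_char_0 mat" where "hh = m2 1 0 0 (-1)"
definition ee :: "'a::field_char_0 mat" where "ee = m2 0 1 0 0"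
definition fe :: "'a::field_char_0 mat" where "fe = m2 0 0 1 0"

lemma hh_sl2[simp]: "hh \<in> sl2" and ee_sl2[simp]: "ee \<in> sl2" and fe_sl2[simp]: "fe \<in> sl2"
  using sl2_m2[of 1 0 0] sl2_m2[of 0 1 0] sl2_m2[of 0 0 1] by (simp_all add: hh_def ee_def fe_def)

lemma lb_m2[simp]: "lie_bracket (m2 a b c d) (m2 a' b' c' d') = m2 a b c d * m2 a' b' c' d' - m2 a' b' c' d' * m2 a b c d"
  by (simp add: lie_bracket_def)
lemma tf_m2[simp]: "trace_form (m2 a b c d) (m2 a' b' c' d') = tr2 (m2 a b c d * m2 a' b' c' d')"
  by (simp add: trace_form_def)

lemma lb_sl2: "u \<in> sl2 \<Longrightarrow> v \<in> sl2 \<Longrightarrow> lie_bracket u v \<in> sl2"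
proof -
  assume "u \<in> sl2" "v \<in> sl2"
  then obtain a b c a' b' c' where uv: "u = m2 a b c (-a)" "v = m2 a' b' c' (-a')" unfolding sl2_iff by blast
  have "lie_bracket u v = m2 (b*c' - b'*c) (2*(a*b' - a'*b)) (2*(c*a' - a*c')) (-(b*c' - b'*c))"
    unfolding uv by (simp add: algebra_simps)
  then show ?thesis by (simp only: sl2_m2)
qed

lemma lb_he: "lie_bracket hh ee = (2::'a::field_char_0) \<cdot>\<^sub>m ee" by (simp add: hh_def ee_def)
lemma lb_hf: "lie_bracket hh fe = (-2::'a::field_char_0) \<cdot>\<^sub>m fe" by (simp add: hh_def fe_def)
lemma lb_ef: "lie_bracket ee fe = (hh::'a::field_char_0 mat)" by (simp add: hh_def ee_def fe_def)

lemma lbs_img: "linear_bij_sl2 f \<Longrightarrow> u \<in> sl2 \<Longrightarrow> f u \<in> sl2"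
  unfolding linear_bij_sl2_def bij_betw_def by auto

lemma lin_decomp:
  assumes "linear_bij_sl2 f"
  shows "f (m2 a b c (-a)) = a \<cdot>\<^sub>m f hh + b \<cdot>\<^sub>m f ee + c \<cdot>\<^sub>m f fe"
proof -
  have add: "\<And>u v. u \<in> sl2 \<Longrightarrow> v \<in> sl2 \<Longrightarrow> f (u + v) = f u + f v"
   and sm: "\<And>k u. u \<in> sl2 \<Longrightarrow> f (k \<cdot>\<^sub>m u) = k \<cdot>\<^sub>m f u" using assms by (auto simp: linear_bij_sl2_def)
  have e1: "m2 a b c (-a) = (a \<cdot>\<^sub>m hh + b \<cdot>\<^sub>m ee) + c \<cdot>\<^sub>m fe" by (simp add: hh_def ee_def fe_def)
  have m1: "a \<cdot>\<^sub>m hh + b \<cdot>\<^sub>m ee \<in> sl2" using sl2_m2[of a b 0] by (simp add: hh_def ee_def)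
  have m2': "c \<cdot>\<^sub>m fe \<in> sl2" using sl2_m2[of 0 0 c] by (simp add: fe_def)
  have m3: "a \<cdot>\<^sub>m hh \<in> sl2" using sl2_m2[of a 0 0] by (simp add: hh_def)
  have m4: "b \<cdot>\<^sub>m ee \<in> sl2" using sl2_m2[of 0 b 0] by (simp add: ee_def)
  show ?thesis unfolding e1 by (simp add: add[OF m1 m2'] add[OF m3 m4] sm)
qed

definition det3 :: "'a::comm_ring_1 \<Rightarrow> 'a \<Rightarrow> 'a \<Rightarrow> 'a \<Rightarrow> 'a \<Rightarrow> 'a \<Rightarrow> 'a \<Rightarrow> 'a \<Rightarrow> 'a \<Rightarrow> 'a" where
  "det3 a1 a2 a3 b1 b2 b3 c1 c2 c3 = a1*(b2*c3 - b3*c2) - a2*(b1*c3 - b3*c1) + a3*(b1*c2 - b2*c1)"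

lemma omega_m2: "trace_form (m2 x1 x2 x3 (-x1)) (lie_bracket (m2 y1 y2 y3 (-y1)) (m2 z1 z2 z3 (-z1)))
   = 2 * det3 x1 x2 x3 y1 y2 y3 z1 z2 z3"
  by (simp add: det3_def algebra_simps)

lemma det3_mult: "det3 (a1*h1+b1*e1+c1*g1) (a1*h2+b1*e2+c1*g2) (a1*h3+b1*e3+c1*g3)
   (a2*h1+b2*e1+c2*g1) (a2*h2+b2*e2+c2*g2) (a2*h3+b2*e3+c2*g3)
   (a3*h1+b3*e1+c3*g1) (a3*h2+b3*e2+c3*g2) (a3*h3+b3*e3+c3*g3)
   = det3 a1 b1 c1 a2 b2 c2 a3 b3 c3 * det3 h1 h2 h3 e1 e2 e3 g1 g2 g3"
  by (simp add: det3_def algebra_simps)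


lemma tf_smult: "A \<in> carrier_mat 2 2 \<Longrightarrow> B \<in> carrier_mat 2 2 \<Longrightarrow> trace_form A (k \<cdot>\<^sub>m B) = k * trace_form A B"
proof -
  assume "A \<in> carrier_mat 2 2" "B \<in> carrier_mat 2 2"
  then obtain a b c d a' b' c' d' where "A = m2 a b c d" "B = m2 a' b' c' d'" using carrier_m2 by metis
  then show ?thesis by (simp add: algebra_simps)
qed

lemma sl2_carrier: "u \<in> sl2 \<Longrightarrow> u \<in> carrier_mat 2 2" by (simp add: sl2_def)

lemma nondeg:
  assumes "X \<in> sl2" "Z \<in> sl2" "trace_form hh X = trace_form hh Z" "trace_form ee X = trace_form ee Z"
    "trace_form fe X = trace_form fe Z"
  shows "X = Z"
proof -
  obtain a b c a' b' c' where XZ: "X = m2 a b c (-a)" "Z = m2 a' b' c' (-a')" using assms(1,2) unfolding sl2_iff by blast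
  show ?thesis using assms(3-5) unfolding XZ by (simp add: hh_def ee_def fe_def)
qed

lemma isom_aa:
  assumes "is_isometry_sl2 f"
  shows "is_automorphism_sl2 f \<or> is_antiautomorphism_sl2 f"
proof -
  have lb: "linear_bij_sl2 f" and tf: "\<And>u v. u \<in> sl2 \<Longrightarrow> v \<in> sl2 \<Longrightarrow> trace_form (f u) (f v) = trace_form u v"
    using assms by (auto simp: is_isometry_sl2_def)
  obtain h1 h2 h3 where H: "f hh = m2 h1 h2 h3 (-h1)" using lbs_img[OF lb hh_sl2] unfolding sl2_iff by blast
  obtain e1 e2 e3 where E: "f ee = m2 e1 e2 e3 (-e1)" using lbs_img[OF lb ee_sl2] unfolding sl2_iff by blast
  obtain g1 g2 g3 where F: "f fe = m2 g1 g2 g3 (-g1)" using lbs_img[OF lb fe_sl2] unfolding sl2_iff by blast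
  have q1: "trace_form (f hh) (f hh) = trace_form hh hh" by (simp add: tf)
  have q2: "trace_form (f hh) (f ee) = trace_form hh ee" by (simp add: tf)
  have q3: "trace_form (f hh) (f fe) = trace_form hh fe" by (simp add: tf)
  have q4: "trace_form (f ee) (f ee) = trace_form ee ee" by (simp add: tf)
  have q5: "trace_form (f ee) (f fe) = trace_form ee fe" by (simp add: tf)
  have q6: "trace_form (f fe) (f fe) = trace_form fe fe" by (simp add: tf)
  note qs = q1 q2 q3 q4 q5 q6
  note qs = qs[unfolded H E F, unfolded hh_def ee_def fe_def, simplified]
  define D where "D = det3 h1 h2 h3 e1 e2 e3 g1 g2 g3"
  have gd: "det3 (2*(h2*h3) + 2*(h1*h1)) (2*(e1*h1) + (h2*e3 + h3*e2)) (2*(g1*h1) + (h2*g3+h3*g2))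
     (2*(e1*h1) + (h2*e3 + h3*e2)) (2*(e2*e3)+2*(e1*e1)) (2*(e1*g1)+(e2*g3+e3*g2))
     (2*(g1*h1) + (h2*g3+h3*g2)) (2*(e1*g1)+(e2*g3+e3*g2)) (2*(g2*g3)+2*(g1*g1)) = -2 * (D*D)"
    unfolding D_def det3_def by (simp add: algebra_simps)
  have D2: "D * D = 1" using gd unfolding qs by (simp add: det3_def)
  have fm: "f (m2 a b c (-a)) = m2 (a*h1+b*e1+c*g1) (a*h2+b*e2+c*g2) (a*h3+b*e3+c*g3) (-(a*h1+b*e1+c*g1))" for a b c
    using lin_decomp[OF lb, of a b c] unfolding H E F by (simp add: algebra_simps)
  have key: "f (lie_bracket v w) = D \<cdot>\<^sub>m lie_bracket (f v) (f w)" if v: "v \<in> sl2" and w: "w \<in> sl2" for v w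
  proof -
    obtain a2 b2 c2 where vv: "v = m2 a2 b2 c2 (-a2)" using v unfolding sl2_iff by blast
    obtain a3 b3 c3 where ww: "w = m2 a3 b3 c3 (-a3)" using w unfolding sl2_iff by blast
    have lbm: "lie_bracket v w \<in> sl2" by (rule lb_sl2[OF v w])
    have X: "f (lie_bracket v w) \<in> sl2" by (rule lbs_img[OF lb lbm])
    have Z: "D \<cdot>\<^sub>m lie_bracket (f v) (f w) \<in> sl2"
      using lb_sl2[OF lbs_img[OF lb v] lbs_img[OF lb w]] unfolding sl2_iff by (auto simp: algebra_simps)
    have gen: "trace_form (f u) (f (lie_bracket v w)) = trace_form (f u) (D \<cdot>\<^sub>m lie_bracket (f v) (f w))"
      if u: "u \<in> sl2" for u
    proof -
      obtain a1 b1 c1 where uu: "u = m2 a1 b1 c1 (-a1)" using u unfolding sl2_iff by blast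
      have "trace_form (f u) (f (lie_bracket v w)) = trace_form u (lie_bracket v w)" by (rule tf[OF u lbm])
      also have "\<dots> = 2 * det3 a1 b1 c1 a2 b2 c2 a3 b3 c3" unfolding uu vv ww by (rule omega_m2)
      also have "\<dots> = D * (2 * (det3 a1 b1 c1 a2 b2 c2 a3 b3 c3 * D))" using D2 by (simp add: algebra_simps)
      also have "\<dots> = D * trace_form (f u) (lie_bracket (f v) (f w))"
        unfolding uu vv ww fm omega_m2 det3_mult D_def by simp
      also have "\<dots> = trace_form (f u) (D \<cdot>\<^sub>m lie_bracket (f v) (f w))"
        by (rule tf_smult[symmetric]) (unfold uu vv ww fm, simp_all)
      finally show ?thesis .
    qed
    have surj: "f ` sl2 = sl2" using lb by (simp add: linear_bij_sl2_def bij_betw_def)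
    obtain uh where "uh \<in> sl2" "f uh = hh" using surj hh_sl2 by (metis imageE)
    note g1 = gen[OF this(1), unfolded this(2)]
    obtain ue where "ue \<in> sl2" "f ue = ee" using surj ee_sl2 by (metis imageE)
    note g2 = gen[OF this(1), unfolded this(2)]
    obtain uf where "uf \<in> sl2" "f uf = fe" using surj fe_sl2 by (metis imageE)
    note g3 = gen[OF this(1), unfolded this(2)]
    show ?thesis by (rule nondeg[OF X Z g1 g2 g3])
  qed
  have "(D - 1) * (D + 1) = 0" using D2 by (simp add: algebra_simps)
  then have "D = 1 \<or> D = -1" by (simp add: eq_neg_iff_add_eq_0)
  then show ?thesis
  proof
    assume "D = 1"
    then have "is_automorphism_sl2 f" using key lb sl2_carrier lbs_img lb_sl2
      by (auto simp: is_automorphism_sl2_def)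
    then show ?thesis ..
  next
    assume D: "D = -1"
    have "f (lie_bracket u v) = lie_bracket (f v) (f u)" if uv: "u \<in> sl2" "v \<in> sl2" for u v
    proof -
      obtain a b c where 1: "f u = m2 a b c (-a)" using lbs_img[OF lb uv(1)] unfolding sl2_iff by blast
      obtain a' b' c' where 2: "f v = m2 a' b' c' (-a')" using lbs_img[OF lb uv(2)] unfolding sl2_iff by blast
      show ?thesis unfolding key[OF uv] D 1 2 by (simp add: algebra_simps)
    qed
    then have "is_antiautomorphism_sl2 f" using lb by (auto simp: is_antiautomorphism_sl2_def)
    then show ?thesis ..
  qed
qed


lemma triple_entries:
  fixes h1 h2 h3 e1 e2 e3 g1 g2 g3 :: "'a::field_char_0"
  assumes r: "h2 * e3 - e2 * h3 = 2 * e1" "2 * (e2 * h1) - 2 * (e1 * h2) = 2 * e2"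
    "2 * (e1 * h3) - 2 * (e3 * h1) = 2 * e3"
    "h2 * g3 - g2 * h3 = - (2 * g1)" "2 * (g2 * h1) - 2 * (g1 * h2) = - (2 * g2)"
    "2 * (g1 * h3) - 2 * (g3 * h1) = - (2 * g3)"
    "e2 * g3 - g2 * e3 = h1" "2 * (e1 * g2) - 2 * (e2 * g1) = h2" "2 * (e3 * g1) - 2 * (e1 * g3) = h3"
    and nz: "h1 \<noteq> 0 \<or> h2 \<noteq> 0 \<or> h3 \<noteq> 0"
  shows "2*h1*h1 + 2*h2*h3 = 2 \<and> 2*e1*e1 + 2*e2*e3 = 0 \<and> 2*g1*g1 + 2*g2*g3 = 0 \<and>
    2*h1*e1 + h2*e3+h3*e2 = 0 \<and> 2*h1*g1 + h2*g3+h3*g2 = 0 \<and> 2*e1*g1 + e2*g3+e3*g2 = 1"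
proof -
  have c2: "\<And>x y::'a. 2*x = 2*y \<Longrightarrow> x = y" by simp
  have r'1: "h1*e2 - e1*h2 = e2" by (rule c2) (insert r(2), simp add: algebra_simps)
  have r'2: "h3*e1 - h1*e3 = e3" by (rule c2) (insert r(3), simp add: algebra_simps)
  have r'3: "h1*g2 - g1*h2 = -g2" by (rule c2) (insert r(5), simp add: algebra_simps)
  have r'4: "h3*g1 - h1*g3 = -g3" by (rule c2) (insert r(6), simp add: algebra_simps)
  note r1 = r(1) and r4 = r(4) and C1 = r(7) and C2 = r(8) and C3 = r(9)
  have a0: "2*e1*e1 + 2*e2*e3 = - (e1*((h2*e3 - e2*h3) - 2*e1) + e3*((h1*e2 - e1*h2) - e2) + e2*((h3*e1 - h1*e3) - e3))" by (simp add: algebra_simps)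
  also have "\<dots> = 0" by (simp only: r1 r'1 r'2 r4 r'3 r'4 C1 C2 C3) simp
  finally have a: "2*e1*e1 + 2*e2*e3 = 0" .
  have b0: "2*g1*g1 + 2*g2*g3 = (g1*((h2*g3 - g2*h3) - (- (2*g1))) + g3*((h1*g2 - g1*h2) - (-g2)) + g2*((h3*g1 - h1*g3) - (-g3)))" by (simp add: algebra_simps)
  also have "\<dots> = 0" by (simp only: r1 r'1 r'2 r4 r'3 r'4 C1 C2 C3) simp
  finally have b: "2*g1*g1 + 2*g2*g3 = 0" .
  have c0: "2*h1*e1 + h2*e3 + h3*e2 = - (2*e1*((e2*g3 - g2*e3) - h1) + e3*((2*(e1*g2) - 2*(e2*g1)) - h2) + e2*((2*(e3*g1) - 2*(e1*g3)) - h3))" by (simp add: algebra_simps)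
  also have "\<dots> = 0" by (simp only: r1 r'1 r'2 r4 r'3 r'4 C1 C2 C3) simp
  finally have c: "2*h1*e1 + h2*e3 + h3*e2 = 0" .
  have d0: "2*h1*g1 + h2*g3 + h3*g2 = - (2*g1*((e2*g3 - g2*e3) - h1) + g3*((2*(e1*g2) - 2*(e2*g1)) - h2) + g2*((2*(e3*g1) - 2*(e1*g3)) - h3))" by (simp add: algebra_simps)
  also have "\<dots> = 0" by (simp only: r1 r'1 r'2 r4 r'3 r'4 C1 C2 C3) simp
  finally have d: "2*h1*g1 + h2*g3 + h3*g2 = 0" .
  have y0: "2*h1*h1 + 2*h2*h3 - 2*(2*e1*g1 + e2*g3 + e3*g2) = 2*(g3*((h1*e2 - e1*h2) - e2)+g2*((h3*e1 - h1*e3) - e3)+g1*((h2*e3 - e2*h3) - 2*e1)) - (2*h1*((e2*g3 - g2*e3) - h1)+h2*((2*(e3*g1) - 2*(e1*g3)) - h3)+h3*((2*(e1*g2) - 2*(e2*g1)) - h2))" by (simp add: algebra_simps)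
  also have "\<dots> = 0" by (simp only: r1 r'1 r'2 r4 r'3 r'4 C1 C2 C3) simp
  finally have y: "2*h1*h1 + 2*h2*h3 - 2*(2*e1*g1 + e2*g3 + e3*g2) = 0" .
  have x10: "2*((2*e1*g1 + e2*g3 + e3*g2)*h1 - h1) = 2*((e2*g3 - g2*e3) - h1) + (((h2*e3 - e2*h3) - 2*e1)+(2*h1*e1 + h2*e3 + h3*e2))*g1 + 2*((h1*e2 - e1*h2) - e2)*g3 + (((h2*g3 - g2*h3) - (- (2*g1)))+(2*h1*g1 + h2*g3 + h3*g2))*e1 + 2*((h1*g2 - g1*h2) - (-g2))*e3" by (simp add: algebra_simps)
  also have "\<dots> = 0" by (simp only: r1 r'1 r'2 r4 r'3 r'4 C1 C2 C3 c d) simp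
  finally have x1: "2*((2*e1*g1 + e2*g3 + e3*g2)*h1 - h1) = 0" .
  have x20: "2*((2*e1*g1 + e2*g3 + e3*g2)*h2 - h2) = 2*((2*(e1*g2) - 2*(e2*g1)) - h2) + (((h2*e3 - e2*h3) - 2*e1)+(2*h1*e1 + h2*e3 + h3*e2))*g2 - 2*((h1*e2 - e1*h2) - e2)*g1 + (((h2*g3 - g2*h3) - (- (2*g1)))+(2*h1*g1 + h2*g3 + h3*g2))*e2 - 2*((h1*g2 - g1*h2) - (-g2))*e1" by (simp add: algebra_simps)
  also have "\<dots> = 0" by (simp only: r1 r'1 r'2 r4 r'3 r'4 C1 C2 C3 c d) simp
  finally have x2: "2*((2*e1*g1 + e2*g3 + e3*g2)*h2 - h2) = 0" .
  have x30: "2*((2*e1*g1 + e2*g3 + e3*g2)*h3 - h3) = 2*((2*(e3*g1) - 2*(e1*g3)) - h3) + 2*((h3*e1 - h1*e3) - e3)*g1 + ((2*h1*e1 + h2*e3 + h3*e2)-((h2*e3 - e2*h3) - 2*e1))*g3 + 2*((h3*g1 - h1*g3) - (-g3))*e1 + ((2*h1*g1 + h2*g3 + h3*g2)-((h2*g3 - g2*h3) - (- (2*g1))))*e3" by (simp add: algebra_simps)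
  also have "\<dots> = 0" by (simp only: r1 r'1 r'2 r4 r'3 r'4 C1 C2 C3 c d) simp
  finally have x3: "2*((2*e1*g1 + e2*g3 + e3*g2)*h3 - h3) = 0" .

  have "(2*e1*g1 + e2*g3 + e3*g2)*h1 - h1 = 0" "(2*e1*g1 + e2*g3 + e3*g2)*h2 - h2 = 0"
     "(2*e1*g1 + e2*g3 + e3*g2)*h3 - h3 = 0" using x1 x2 x3 by simp_all
  then have "(2*e1*g1 + e2*g3 + e3*g2 - 1) * h1 = 0" "(2*e1*g1 + e2*g3 + e3*g2 - 1) * h2 = 0"
     "(2*e1*g1 + e2*g3 + e3*g2 - 1) * h3 = 0" by (simp_all only: left_diff_distrib mult_1)
  then have e: "2*e1*g1 + e2*g3+e3*g2 = 1" using nz by auto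
  show ?thesis using a b c d e y by (simp add: algebra_simps)
qed

lemma triple:
  fixes h1 h2 h3 e1 e2 e3 g1 g2 g3 :: "'a::field_char_0"
  assumes HE: "lie_bracket (m2 h1 h2 h3 (-h1)) (m2 e1 e2 e3 (-e1)) = 2 \<cdot>\<^sub>m m2 e1 e2 e3 (-e1)"
    and HF: "lie_bracket (m2 h1 h2 h3 (-h1)) (m2 g1 g2 g3 (-g1)) = (-2) \<cdot>\<^sub>m m2 g1 g2 g3 (-g1)"
    and EF: "lie_bracket (m2 e1 e2 e3 (-e1)) (m2 g1 g2 g3 (-g1)) = m2 h1 h2 h3 (-h1)"
    and nz: "m2 h1 h2 h3 (-h1) \<noteq> m2 0 0 0 0"
  shows "2*h1*h1 + 2*h2*h3 = 2 \<and> 2*e1*e1 + 2*e2*e3 = 0 \<and> 2*g1*g1 + 2*g2*g3 = 0 \<and>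
    2*h1*e1 + h2*e3+h3*e2 = 0 \<and> 2*h1*g1 + h2*g3+h3*g2 = 0 \<and> 2*e1*g1 + e2*g3+e3*g2 = 1"
proof -
  note hs = HE[simplified] HF[simplified] EF[simplified]
  have nz': "h1 \<noteq> 0 \<or> h2 \<noteq> 0 \<or> h3 \<noteq> 0" using nz by auto
  show ?thesis by (rule triple_entries[OF _ _ _ _ _ _ _ _ _ nz']) (use hs in blast)+
qed

lemma gram_isom:
  fixes f :: "'a::field_char_0 mat \<Rightarrow> 'a mat"
  assumes lb: "linear_bij_sl2 f" and H: "f hh = m2 h1 h2 h3 (-h1)" and E: "f ee = m2 e1 e2 e3 (-e1)"
    and F: "f fe = m2 g1 g2 g3 (-g1)"
    and gr: "2*h1*h1 + 2*h2*h3 = 2 \<and> 2*e1*e1 + 2*e2*e3 = 0 \<and> 2*g1*g1 + 2*g2*g3 = 0 \<and>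
    2*h1*e1 + h2*e3+h3*e2 = 0 \<and> 2*h1*g1 + h2*g3+h3*g2 = 0 \<and> 2*e1*g1 + e2*g3+e3*g2 = 1"
  shows "is_isometry_sl2 f"
proof -
  have fm: "f (m2 a b c (-a)) = m2 (a*h1+b*e1+c*g1) (a*h2+b*e2+c*g2) (a*h3+b*e3+c*g3) (-(a*h1+b*e1+c*g1))" for a b c
    using lin_decomp[OF lb, of a b c] unfolding H E F by (simp add: algebra_simps)
  have "trace_form (f u) (f v) = trace_form u v" if u: "u \<in> sl2" and v: "v \<in> sl2" for u v
  proof -
    obtain a b c where uu: "u = m2 a b c (-a)" using u unfolding sl2_iff by blast
    obtain a' b' c' where vv: "v = m2 a' b' c' (-a')" using v unfolding sl2_iff by blast
    have "trace_form (f u) (f v) = a*a'*(2*h1*h1+2*h2*h3) + b*b'*(2*e1*e1+2*e2*e3) + c*c'*(2*g1*g1+2*g2*g3)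
      + (a*b'+b*a')*(2*h1*e1+h2*e3+h3*e2) + (a*c'+c*a')*(2*h1*g1+h2*g3+h3*g2) + (b*c'+c*b')*(2*e1*g1+e2*g3+e3*g2)"
      unfolding uu vv fm by (simp add: algebra_simps)
    also have "\<dots> = trace_form u v" using gr unfolding uu vv by (simp add: algebra_simps)
    finally show ?thesis .
  qed
  then show ?thesis using lb by (simp add: is_isometry_sl2_def)
qed

lemma f_nz:
  fixes f :: "'a::field_char_0 mat \<Rightarrow> 'a mat"
  assumes lb: "linear_bij_sl2 f" and H: "f hh = m2 h1 h2 h3 (-h1)"
  shows "m2 h1 h2 h3 (-h1) \<noteq> m2 0 0 0 0"
proof
  assume z: "m2 h1 h2 h3 (-h1) = m2 0 0 0 0"
  have "f (m2 0 0 0 (-0)) = 0 \<cdot>\<^sub>m f hh + 0 \<cdot>\<^sub>m f ee + 0 \<cdot>\<^sub>m f fe" by (rule lin_decomp[OF lb])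
  also have "\<dots> = m2 0 0 0 0"
    using lbs_img[OF lb ee_sl2] lbs_img[OF lb fe_sl2] unfolding H sl2_iff by auto
  finally have fz: "f (m2 0 0 0 0) = f hh" using H z by simp
  have inj: "inj_on f sl2" using lb by (simp add: linear_bij_sl2_def bij_betw_def)
  have "m2 0 0 0 (-0) \<in> (sl2::'a mat set)" by (rule sl2_m2)
  then have "m2 0 0 0 0 = (hh::'a mat)" using inj_onD[OF inj fz] hh_sl2 by simp
  then show False by (simp add: hh_def)
qed

lemma aut_isom:
  fixes f :: "'a::field_char_0 mat \<Rightarrow> 'a mat"
  assumes "is_automorphism_sl2 f" shows "is_isometry_sl2 f"
proof -
  have lb: "linear_bij_sl2 f" and br: "\<And>u v. u \<in> sl2 \<Longrightarrow> v \<in> sl2 \<Longrightarrow> f (lie_bracket u v) = lie_bracket (f u) (f v)"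
    using assms by (auto simp: is_automorphism_sl2_def)
  have sm: "\<And>k u. u \<in> sl2 \<Longrightarrow> f (k \<cdot>\<^sub>m u) = k \<cdot>\<^sub>m f u" using lb by (auto simp: linear_bij_sl2_def)
  obtain h1 h2 h3 where H: "f hh = m2 h1 h2 h3 (-h1)" using lbs_img[OF lb hh_sl2] unfolding sl2_iff by blast
  obtain e1 e2 e3 where E: "f ee = m2 e1 e2 e3 (-e1)" using lbs_img[OF lb ee_sl2] unfolding sl2_iff by blast
  obtain g1 g2 g3 where F: "f fe = m2 g1 g2 g3 (-g1)" using lbs_img[OF lb fe_sl2] unfolding sl2_iff by blast
  have 1: "lie_bracket (m2 h1 h2 h3 (-h1)) (m2 e1 e2 e3 (-e1)) = 2 \<cdot>\<^sub>m m2 e1 e2 e3 (-e1)"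
    using br[OF hh_sl2 ee_sl2] unfolding lb_he sm[OF ee_sl2] H E by simp
  have 2: "lie_bracket (m2 h1 h2 h3 (-h1)) (m2 g1 g2 g3 (-g1)) = (-2) \<cdot>\<^sub>m m2 g1 g2 g3 (-g1)"
    using br[OF hh_sl2 fe_sl2] unfolding lb_hf sm[OF fe_sl2] H F by simp
  have 3: "lie_bracket (m2 e1 e2 e3 (-e1)) (m2 g1 g2 g3 (-g1)) = m2 h1 h2 h3 (-h1)"
    using br[OF ee_sl2 fe_sl2] unfolding lb_ef H E F by simp
  show ?thesis by (rule gram_isom[OF lb H E F triple[OF 1 2 3 f_nz[OF lb H]]])
qed

lemma anti_isom:
  fixes f :: "'a::field_char_0 mat \<Rightarrow> 'a mat"
  assumes "is_antiautomorphism_sl2 f" shows "is_isometry_sl2 f"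
proof -
  have lb: "linear_bij_sl2 f" and br: "\<And>u v. u \<in> sl2 \<Longrightarrow> v \<in> sl2 \<Longrightarrow> f (lie_bracket u v) = lie_bracket (f v) (f u)"
    using assms by (auto simp: is_antiautomorphism_sl2_def)
  have sm: "\<And>k u. u \<in> sl2 \<Longrightarrow> f (k \<cdot>\<^sub>m u) = k \<cdot>\<^sub>m f u" using lb by (auto simp: linear_bij_sl2_def)
  obtain h1 h2 h3 where H: "f hh = m2 h1 h2 h3 (-h1)" using lbs_img[OF lb hh_sl2] unfolding sl2_iff by blast
  obtain e1 e2 e3 where E: "f ee = m2 e1 e2 e3 (-e1)" using lbs_img[OF lb ee_sl2] unfolding sl2_iff by blast
  obtain g1 g2 g3 where F: "f fe = m2 g1 g2 g3 (-g1)" using lbs_img[OF lb fe_sl2] unfolding sl2_iff by blast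
  have i1: "lie_bracket (f ee) (f hh) = 2 \<cdot>\<^sub>m f ee"
    using br[OF hh_sl2 ee_sl2] unfolding lb_he sm[OF ee_sl2] by simp
  have i2: "lie_bracket (f fe) (f hh) = (-2) \<cdot>\<^sub>m f fe"
    using br[OF hh_sl2 fe_sl2] unfolding lb_hf sm[OF fe_sl2] by simp
  have i3: "lie_bracket (f fe) (f ee) = f hh"
    using br[OF ee_sl2 fe_sl2] unfolding lb_ef by simp
  have 1: "lie_bracket (m2 (-h1) (-h2) (-h3) (-(-h1))) (m2 e1 e2 e3 (-e1)) = 2 \<cdot>\<^sub>m m2 e1 e2 e3 (-e1)"
  proof -
    have "lie_bracket (m2 (-h1) (-h2) (-h3) (-(-h1))) (m2 e1 e2 e3 (-e1)) = lie_bracket (m2 e1 e2 e3 (-e1)) (m2 h1 h2 h3 (-h1))"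
      by (simp add: algebra_simps)
    then show ?thesis using i1 unfolding H E by simp
  qed
  have 2: "lie_bracket (m2 (-h1) (-h2) (-h3) (-(-h1))) (m2 g1 g2 g3 (-g1)) = (-2) \<cdot>\<^sub>m m2 g1 g2 g3 (-g1)"
  proof -
    have "lie_bracket (m2 (-h1) (-h2) (-h3) (-(-h1))) (m2 g1 g2 g3 (-g1)) = lie_bracket (m2 g1 g2 g3 (-g1)) (m2 h1 h2 h3 (-h1))"
      by (simp add: algebra_simps)
    then show ?thesis using i2 unfolding H F by simp
  qed
  have 3: "lie_bracket (m2 e1 e2 e3 (-e1)) (m2 g1 g2 g3 (-g1)) = m2 (-h1) (-h2) (-h3) (-(-h1))"
  proof -
    have "lie_bracket (m2 e1 e2 e3 (-e1)) (m2 g1 g2 g3 (-g1)) = (-1) \<cdot>\<^sub>m lie_bracket (m2 g1 g2 g3 (-g1)) (m2 e1 e2 e3 (-e1))"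
      by (simp add: algebra_simps)
    also have "\<dots> = (-1) \<cdot>\<^sub>m m2 h1 h2 h3 (-h1)" using i3 unfolding H E F by simp
    finally show ?thesis by simp
  qed
  have nz: "m2 (-h1) (-h2) (-h3) (-(-h1)) \<noteq> m2 0 0 0 0" using f_nz[OF lb H] by auto
  have gr: "2*h1*h1 + 2*h2*h3 = 2 \<and> 2*e1*e1 + 2*e2*e3 = 0 \<and> 2*g1*g1 + 2*g2*g3 = 0 \<and>
    2*h1*e1 + h2*e3+h3*e2 = 0 \<and> 2*h1*g1 + h2*g3+h3*g2 = 0 \<and> 2*e1*g1 + e2*g3+e3*g2 = 1"
  proof -
    note T = triple[OF 1 2 3 nz]
    have t1: "2*h1*e1 + h2*e3+h3*e2 = -(2*(-h1)*e1 + (-h2)*e3 + (-h3)*e2)" by (simp add: algebra_simps)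
    have t2: "2*h1*g1 + h2*g3+h3*g2 = -(2*(-h1)*g1 + (-h2)*g3 + (-h3)*g2)" by (simp add: algebra_simps)
    have t3: "2*h1*h1 + 2*h2*h3 = 2*(-h1)*(-h1) + 2*(-h2)*(-h3)" by simp
    show ?thesis using T unfolding t1 t2 t3 by simp
  qed
  show ?thesis by (rule gram_isom[OF lb H E F gr])
qed

theorem theorem5p5:
  shows "(AAut_Z_L :: ('a::field_char_0 mat \<Rightarrow> 'a mat) set) = Isom_Z_L"
  unfolding AAut_Z_L_def Isom_Z_L_def using aut_isom anti_isom isom_aa by blast

end
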